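(* Consider the slotted transmission system and transmission policy $P$ described in the context, with loss probability $p$ satisfying $0<p<1$, feedback delay $d\ge 0$ and threshold $\gamma\ge 0$. Suppose that the estimate $\hat{Q}^r_k$ satisfies $Q^r_k-\hat{Q}^r_k\le\delta$ for all $k=1,2,\dots$, for some $\delta\ge 0$. Then $Q^r_k$ converges almost surely to the interval $0\le Q^r_k\le \gamma+\delta+1$ as $k\to\infty$.
   Context: Time is slotted, slots $k=1,2,\dots$; each slot carries at most one packet transmission over a lossy path. Information packets arrive at the transmitter according to $A_k\in\{0,1\}$ and are held in a transmitter queue $Q^t_{k+1}=[Q^t_k+A_k-S_k]^+$, $Q^t_1=0$, where $[x]^+=\max\{x,0\}$. In slot $k$, $S_k\in\{0,1\}$ indicates that an information packet is sent and $C_k\in\{0,1\}$ indicates that a coded packet is sent ($S_k+C_k\le 1$). Erasures: $X_k=1$ if the packet sent in slot $k$ is erased and $0$ otherwise; $\{X_k\}$ is i.i.d. with $\Pr(X_k=1)=p$, independent of the transmitter's decisions up to slot $k$. The virtual receiver queue evolves as $Q^r_{k+1}=[Q^r_k+S_kX_k-C_k(1-X_k)]^+$ (non-negative integer valued). Feedback reaches the transmitter with delay $d$ slots, so in slot $k$ the transmitter knows $Q^r_{k-d}$ (quantities with non-positive indices are given initial values). The estimator is $\hat{Q}^r_k=Q^r_{k-d}+\sum_{j=k-d}^{k-1}(S_jp-C_j(1-p))$. Transmission policy $P$ with parameter $\gamma\ge 0$: $C_k\in\arg\min_{C\in\{0,1\}}(-\hat{Q}^r_k+\gamma)C$ and $S_k=\min\{Q^t_k+A_k,\,1-C_k\}$.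 *)

theory Defs
  imports "HOL-Probability.Probability"
begin

text \<open>Slots are indexed by integers; the system equations are imposed for slots
  k \<ge> 1, while quantities with non-positive indices are arbitrary given initial values.\<close>

definition Qhat :: "(int \<Rightarrow> int) \<Rightarrow> (int \<Rightarrow> int) \<Rightarrow> (int \<Rightarrow> int) \<Rightarrow> real \<Rightarrow> nat \<Rightarrow> int \<Rightarrow> real" where
  "Qhat Qr S C p d k =
     real_of_int (Qr (k - int d)) +
     (\<Sum>j\<in>{k - int d..k - 1}. real_of_int (S j) * p - real_of_int (C j) * (1 - p))"

end

theory Submission
  imports Defs
begin

lemma det:
  fixes qr qt s c x a :: "int \<Rightarrow> int" and B :: real
  assumes B: "B \<ge> 1"
    and C1: "\<And>k. k \<ge> 1 \<Longrightarrow> real_of_int (qr k) > B - 1 \<Longrightarrow> c k = 1"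
    and x_val: "\<And>k. k \<ge> 1 \<Longrightarrow> x k \<in> {0,1}"
    and a_val: "\<And>k. k \<ge> 1 \<Longrightarrow> a k \<in> {0,1}"
    and c_val: "\<And>k. k \<ge> 1 \<Longrightarrow> c k \<in> {0,1}"
    and qt_init: "qt 1 = 0"
    and qt_step: "\<And>k. k \<ge> 1 \<Longrightarrow> qt (k+1) = max 0 (qt k + a k - s k)"
    and qr_init: "qr 1 \<ge> 0"
    and qr_step: "\<And>k. k \<ge> 1 \<Longrightarrow> qr (k+1) = max 0 (qr k + s k * x k - c k * (1 - x k))"
    and s_def: "\<And>k. k \<ge> 1 \<Longrightarrow> s k = min (qt k + a k) (1 - c k)"
    and inf0: "\<And>k0. k0 \<ge> 1 \<Longrightarrow> \<exists>k\<ge>k0. x k = 0"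
  shows "\<exists>N. \<forall>k\<ge>N. 0 \<le> qr k \<and> real_of_int (qr k) \<le> B"
proof -
  have qt_nn: "qt k \<ge> 0" if "k \<ge> 1" for k
    using that by (induct k rule: int_ge_induct) (auto simp: qt_init qt_step)
  have qr_nn: "qr k \<ge> 0" if "k \<ge> 1" for k
    using that by (induct k rule: int_ge_induct) (auto simp: qr_init qr_step)
  have s_b: "0 \<le> s k \<and> s k \<le> 1 - c k" if "k \<ge> 1" for k
    using qt_nn[OF that] a_val[OF that] c_val[OF that] s_def[OF that] by auto
  have dec: "qr (k+1) \<le> qr k \<and> (x k = 0 \<longrightarrow> qr (k+1) = qr k - 1)"
    if k: "k \<ge> 1" and g: "real_of_int (qr k) > B - 1" for k
  proof -
    have "c k = 1" using C1 k g by blast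
    then have "s k = 0" using s_b[OF k] by auto
    moreover have "qr k \<ge> 1" using g B by linarith
    ultimately show ?thesis using qr_step[OF k] x_val[OF k] \<open>c k = 1\<close> by auto
  qed
  have stay: "real_of_int (qr (k+1)) \<le> B" if k: "k \<ge> 1" and le: "real_of_int (qr k) \<le> B" for k
  proof (cases "real_of_int (qr k) > B - 1")
    case True
    then show ?thesis using dec[OF k True] le by linarith
  next
    case False
    have "qr (k+1) \<le> qr k + 1"
      using qr_step[OF k] s_b[OF k] x_val[OF k] c_val[OF k] qr_nn[OF k]
      by (auto simp: max_def)
    then show ?thesis using False by linarith
  qed
  show ?thesis
  proof (cases "\<exists>n\<ge>1. real_of_int (qr n) \<le> B")
    case True
    then obtain n where n: "n \<ge> 1" "real_of_int (qr n) \<le> B" by blast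
    have "real_of_int (qr k) \<le> B" if "k \<ge> n" for k
      using that
    proof (induct k rule: int_ge_induct)
      case base then show ?case using n by simp
    next
      case (step i) then show ?case using stay[of i] n by simp
    qed
    then show ?thesis using qr_nn n(1) by (intro exI[of _ n]) auto
  next
    case False
    then have big: "real_of_int (qr k) > B - 1" if "k \<ge> 1" for k
      using that by force
    have mono: "qr k' \<le> qr k" if "k \<ge> 1" "k' \<ge> k" for k k'
      using that(2)
    proof (induct k' rule: int_ge_induct)
      case base then show ?case by simp
    next
      case (step i) then show ?case using dec[of i] big[of i] that(1) by force
    qed
    have "\<exists>k\<ge>1. qr k \<le> qr 1 - int j" for j
    proof (induct j)
      case 0 then show ?case by auto
    next
      case (Suc j)
      then obtain k where k: "k \<ge> 1" "qr k \<le> qr 1 - int j" by blast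
      obtain k' where k': "k' \<ge> k" "x k' = 0" using inf0[OF k(1)] by blast
      have "qr (k'+1) = qr k' - 1" using dec[of k'] big[of k'] k k' by auto
      moreover have "qr k' \<le> qr k" using mono k k' by blast
      ultimately show ?case using k k' by (intro exI[of _ "k'+1"]) auto
    qed
    from this[of "nat (qr 1) + 1"] obtain k where "k \<ge> 1" "qr k \<le> qr 1 - int (nat (qr 1) + 1)"
      by blast
    then show ?thesis using qr_nn[of k] qr_init by linarith
  qed
qed

theorem theorem1:
  fixes M :: "'a measure"
    and A X Qt Qr S C :: "int \<Rightarrow> 'a \<Rightarrow> int"
    and p \<gamma> \<delta> :: real and d :: nat
  assumes M: "prob_space M"
    and p: "0 < p" "p < 1"
    and \<gamma>: "\<gamma> \<ge> 0"
    and \<delta>: "\<delta> \<ge> 0"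
    \<comment> \<open>erasures: i.i.d. Bernoulli(p), independent of the decisions up to slot k\<close>
    and X_indep: "prob_space.indep_vars M (\<lambda>_. count_space UNIV) X {1..}"
    and X_val: "\<And>k \<omega>. k \<ge> 1 \<Longrightarrow> \<omega> \<in> space M \<Longrightarrow> X k \<omega> \<in> {0, 1}"
    and X_prob: "\<And>k. k \<ge> 1 \<Longrightarrow> measure M {\<omega> \<in> space M. X k \<omega> = 1} = p"
    and X_dec: "\<And>k. k \<ge> 1 \<Longrightarrow>
       prob_space.indep_set M
         (sets (vimage_algebra (space M) (X k) (count_space (UNIV :: int set))))
         (sets (vimage_algebra (space M) (\<lambda>\<omega>. map (\<lambda>j. (S j \<omega>, C j \<omega>)) [1..k])
                 (count_space (UNIV :: (int \<times> int) list set))))"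
    \<comment> \<open>arrivals\<close>
    and A_val: "\<And>k \<omega>. k \<ge> 1 \<Longrightarrow> \<omega> \<in> space M \<Longrightarrow> A k \<omega> \<in> {0, 1}"
    \<comment> \<open>transmitter queue\<close>
    and Qt_init: "\<And>\<omega>. \<omega> \<in> space M \<Longrightarrow> Qt 1 \<omega> = 0"
    and Qt_step: "\<And>k \<omega>. k \<ge> 1 \<Longrightarrow> \<omega> \<in> space M \<Longrightarrow>
       Qt (k + 1) \<omega> = max 0 (Qt k \<omega> + A k \<omega> - S k \<omega>)"
    \<comment> \<open>virtual receiver queue (non-negative integer valued)\<close>
    and Qr_init: "\<And>\<omega>. \<omega> \<in> space M \<Longrightarrow> Qr 1 \<omega> \<ge> 0"
    and Qr_step: "\<And>k \<omega>. k \<ge> 1 \<Longrightarrow> \<omega> \<in> space M \<Longrightarrow>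
       Qr (k + 1) \<omega> = max 0 (Qr k \<omega> + S k \<omega> * X k \<omega> - C k \<omega> * (1 - X k \<omega>))"
    \<comment> \<open>policy P with parameter gamma\<close>
    and C_val: "\<And>k \<omega>. k \<ge> 1 \<Longrightarrow> \<omega> \<in> space M \<Longrightarrow> C k \<omega> \<in> {0, 1}"
    and C_argmin: "\<And>k \<omega> c. k \<ge> 1 \<Longrightarrow> \<omega> \<in> space M \<Longrightarrow> c \<in> {0, 1::int} \<Longrightarrow>
       (\<gamma> - Qhat (\<lambda>j. Qr j \<omega>) (\<lambda>j. S j \<omega>) (\<lambda>j. C j \<omega>) p d k) * real_of_int (C k \<omega>)
         \<le> (\<gamma> - Qhat (\<lambda>j. Qr j \<omega>) (\<lambda>j. S j \<omega>) (\<lambda>j. C j \<omega>) p d k) * real_of_int c"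
    and S_def: "\<And>k \<omega>. k \<ge> 1 \<Longrightarrow> \<omega> \<in> space M \<Longrightarrow>
       S k \<omega> = min (Qt k \<omega> + A k \<omega>) (1 - C k \<omega>)"
    \<comment> \<open>estimation error bound\<close>
    and est: "\<And>k \<omega>. k \<ge> 1 \<Longrightarrow> \<omega> \<in> space M \<Longrightarrow>
       real_of_int (Qr k \<omega>) - Qhat (\<lambda>j. Qr j \<omega>) (\<lambda>j. S j \<omega>) (\<lambda>j. C j \<omega>) p d k \<le> \<delta>"
  shows "AE \<omega> in M. \<exists>N. \<forall>k\<ge>N. 0 \<le> Qr k \<omega> \<and> real_of_int (Qr k \<omega>) \<le> \<gamma> + \<delta> + 1"
  proof -
  interpret prob_space M by (rule M)
  have X2: "(\<forall>i\<in>{1..}. random_variable (count_space UNIV) (X i)) \<and>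
    indep_sets (\<lambda>i. { X i -` B \<inter> space M | B. B \<in> sets (count_space UNIV)}) {1..}"
    using X_indep unfolding indep_vars_def2 by simp
  define E where "E j = {\<omega>\<in>space M. X j \<omega> = 1}" for j
  have E_eq: "E j = X j -` {1} \<inter> space M" for j unfolding E_def by auto
  have E_sets: "E j \<in> events" if "j \<ge> 1" for j
  proof -
    have "X j \<in> measurable M (count_space UNIV)" using X2 that by auto
    then show ?thesis unfolding E_eq by (rule measurable_sets) simp
  qed
  have prodm: "prob (\<Inter>j\<in>{int n+1..int n+int m+1}. E j) = p^(m+1)" for n m :: nat
  proof -
    have "prob (\<Inter>j\<in>{int n+1..int n+int m+1}. E j) = (\<Prod>j\<in>{int n+1..int n+int m+1}. prob (E j))"
      apply (rule indep_setsD[OF conjunct2[OF X2]])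
      apply (auto simp: E_eq)
      done
    also have "\<dots> = (\<Prod>j\<in>{int n+1..int n+int m+1}. p)"
      by (rule prod.cong) (auto simp: E_def X_prob)
    also have "\<dots> = p^(m+1)" by (simp add: nat_add_distrib)
    finally show ?thesis .
  qed
  define F where "F n = (\<Inter>k::nat. E (int n + int k + 1))" for n :: nat
  have F_null: "F n \<in> null_sets M" for n
  proof -
    have Fs: "F n \<in> events" unfolding F_def
      by (rule sets.countable_INT') (auto intro: E_sets)
    have le: "prob (F n) \<le> p^(m+1)" for m
    proof -
      have "F n \<subseteq> (\<Inter>j\<in>{int n+1..int n+int m+1}. E j)"
        unfolding F_def
      proof
        fix \<omega> assume "\<omega> \<in> (\<Inter>k::nat. E (int n + int k + 1))"
        note h = this
        show "\<omega> \<in> (\<Inter>j\<in>{int n+1..int n+int m+1}. E j)"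
        proof
          fix j assume "j \<in> {int n+1..int n+int m+1}"
          then have "j = int n + int (nat (j - int n - 1)) + 1" by auto
          moreover have "\<omega> \<in> E (int n + int (nat (j - int n - 1)) + 1)" using h by blast
          ultimately show "\<omega> \<in> E j" by simp
        qed
      qed
      moreover have "(\<Inter>j\<in>{int n+1..int n+int m+1}. E j) \<in> events"
        by (rule sets.countable_INT') (auto intro: E_sets)
      ultimately show ?thesis using finite_measure_mono prodm by metis
    qed
    have "prob (F n) \<le> 0"
    proof (rule field_le_epsilon)
      fix e :: real assume e: "0 < e"
      obtain m where "p ^ m < e" using real_arch_pow_inv[OF e p(2)] by blast
      moreover have "p^(m+1) \<le> p^m" using p by (simp add: power_decreasing)
      ultimately show "prob (F n) \<le> 0 + e" using le[of m] by simp
    qed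
    then have "prob (F n) = 0" using measure_nonneg[of M "F n"] by linarith
    then show ?thesis using Fs by (simp add: emeasure_eq_measure null_sets_def)
  qed
  have N_null: "(\<Union>n. F n) \<in> null_sets M"
    by (rule null_sets_UN') (auto intro: F_null)
  show ?thesis
  proof (rule AE_I'[OF N_null], safe)
    fix \<omega> assume \<omega>: "\<omega> \<in> space M"
      and nb: "\<not> (\<exists>N. \<forall>k\<ge>N. 0 \<le> Qr k \<omega> \<and> real_of_int (Qr k \<omega>) \<le> \<gamma> + \<delta> + 1)"
    show "\<omega> \<in> (\<Union>n. F n)"
    proof (rule ccontr)
      assume nF: "\<omega> \<notin> (\<Union>n. F n)"
      have inf0: "\<exists>k\<ge>k0. X k \<omega> = 0" if "k0 \<ge> 1" for k0
      proof -
        have "\<omega> \<notin> F (nat k0)" using nF by blast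
        then obtain k :: nat where "\<omega> \<notin> E (int (nat k0) + int k + 1)" unfolding F_def by blast
        then have "X (k0 + int k + 1) \<omega> \<noteq> 1" using that \<omega> by (auto simp: E_def)
        then have "X (k0 + int k + 1) \<omega> = 0" using X_val[of "k0 + int k + 1" \<omega>] that \<omega> by auto
        then show ?thesis by (intro exI[of _ "k0 + int k + 1"]) auto
      qed
      have C1: "C k \<omega> = 1" if k: "k \<ge> 1" and g: "real_of_int (Qr k \<omega>) > \<gamma> + \<delta> + 1 - 1" for k
      proof -
        let ?h = "Qhat (\<lambda>j. Qr j \<omega>) (\<lambda>j. S j \<omega>) (\<lambda>j. C j \<omega>) p d k"
        have "\<gamma> - ?h < 0" using est[OF k \<omega>] g by linarith
        moreover have "(\<gamma> - ?h) * real_of_int (C k \<omega>) \<le> (\<gamma> - ?h) * 1"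
          using C_argmin[OF k \<omega>, of 1] by simp
        ultimately show ?thesis using C_val[OF k \<omega>] by auto
      qed
      have "\<exists>N. \<forall>k\<ge>N. 0 \<le> Qr k \<omega> \<and> real_of_int (Qr k \<omega>) \<le> \<gamma> + \<delta> + 1"
        apply (rule det[where qt="\<lambda>k. Qt k \<omega>" and s="\<lambda>k. S k \<omega>" and c="\<lambda>k. C k \<omega>"
              and x="\<lambda>k. X k \<omega>" and a="\<lambda>k. A k \<omega>"])
        using \<gamma> \<delta> C1 X_val[OF _ \<omega>] A_val[OF _ \<omega>] C_val[OF _ \<omega>] Qt_init[OF \<omega>] Qt_step[OF _ \<omega>]
          Qr_init[OF \<omega>] Qr_step[OF _ \<omega>] S_def[OF _ \<omega>] inf0
        by auto
      then show False using nb by blast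
    qed
  qed
qed

end
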